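(* Let $a,b,c$ be independent Uniform$[0,1]$ random variables and, writing $x \bmod 1 := x-\lfloor x\rfloor$, define $u=(a+b+c)\bmod 1$, $v=(a/2+b/2+c)\bmod 1$, $w=(4a/3+2b/3+c)\bmod 1$, $z=(2a/3+b/3+c)\bmod 1$. Let $Y=(a,b)$ and $X=(u,v,w,z)$. Then each of $u$, $v$, $w$, $z$ is (individually) independent of $Y$, whereas $Y$ is almost surely equal to a measurable function of $X$. *)

theory Defs
  imports "HOL-Probability.Probability"
begin

text \<open>x mod 1 is the library's frac x = x - of_int (floor x).\<close>

end

theory Submission
  imports Defs
begin

lemma frac_meas[measurable]: "frac \<in> borel_measurable (borel :: real measure)"
  unfolding frac_def by measurable

lemma lborel_shift:
  fixes S :: "real set"
  assumes "S \<in> sets borel"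
  shows "emeasure lborel ((\<lambda>t. t + r) -` S) = emeasure lborel S"
proof -
  have "emeasure lborel S = emeasure (distr lborel borel ((+) r)) S"
    by (simp add: lborel_distr_plus)
  also have "\<dots> = emeasure lborel ((+) r -` S)"
    using assms by (subst emeasure_distr) auto
  also have "(+) r -` S = (\<lambda>t. t + r) -` S" by (auto simp: add.commute)
  finally show ?thesis by simp
qed

lemma key0:
  fixes r :: real
  assumes r: "0 \<le> r" "r < 1" and A: "A \<in> sets borel"
  shows "emeasure lborel ({t. frac (r + t) \<in> A} \<inter> {0..<1}) = emeasure lborel (A \<inter> {0..<1})"
proof -
  define T1 where "T1 = (\<lambda>t. t + r) -` (A \<inter> {r..<1})"
  define T2 where "T2 = (\<lambda>t. t + (r - 1)) -` (A \<inter> {0..<r})"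
  have eq: "{t. frac (r + t) \<in> A} \<inter> {0..<1} = T1 \<union> T2"
  proof (rule set_eqI)
    fix t
    have f1: "frac (r + t) = r + t" if "0 \<le> t" "r + t < 1" using that r by (simp add: frac_eq)
    have f2: "frac (r + t) = r + t - 1" if "t < 1" "1 \<le> r + t" using that r
      by (simp add: frac_unique_iff)
    have f2': "frac (r + t) = r + t - 1" if "t < 1" "\<not> r + t < 1" using that f2 by simp
    show "t \<in> {t. frac (r + t) \<in> A} \<inter> {0..<1} \<longleftrightarrow> t \<in> T1 \<union> T2"
    proof (cases "r + t < 1")
      case True then show ?thesis using f1 r unfolding T1_def T2_def by (auto simp: add.commute)
    next
      case False
      then have f3: "t < 1 \<Longrightarrow> (frac (r + t) \<in> A) = (r + t - 1 \<in> A)" using f2' by simp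
      show ?thesis using False f3 r unfolding T1_def T2_def by (auto simp: algebra_simps)
    qed
  qed
  have dis: "T1 \<inter> T2 = {}" unfolding T1_def T2_def by auto
  have m1: "T1 \<in> sets lborel" "T2 \<in> sets lborel" unfolding T1_def T2_def using A by auto
  have "emeasure lborel (T1 \<union> T2) = emeasure lborel T1 + emeasure lborel T2"
    using m1 dis by (simp add: plus_emeasure)
  also have "\<dots> = emeasure lborel (A \<inter> {r..<1}) + emeasure lborel (A \<inter> {0..<r})"
    unfolding T1_def T2_def using A by (simp only: lborel_shift sets.Int atLeastLessThan_borel sets_lborel)
  also have "\<dots> = emeasure lborel ((A \<inter> {r..<1}) \<union> (A \<inter> {0..<r}))"
    using A by (subst plus_emeasure) auto
  also have "(A \<inter> {r..<1}) \<union> (A \<inter> {0..<r}) = A \<inter> {0..<1}" using r by auto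
  finally show ?thesis using eq by simp
qed

lemma key1:
  fixes s :: real
  assumes A: "A \<in> sets borel"
  shows "emeasure (density lborel (indicator {0..1})) {t. frac (s + t) \<in> A} = emeasure lborel (A \<inter> {0..<1})"
proof -
  have mA: "{t. frac (s + t) \<in> A} \<in> sets borel" using A by measurable
  have "emeasure (density lborel (indicator {0..1})) {t. frac (s + t) \<in> A}
      = emeasure lborel ({t. frac (s + t) \<in> A} \<inter> {0..1})"
    using mA by (subst emeasure_density) (auto simp: indicator_inter_arith[symmetric] Int_commute intro!: nn_integral_indicator)
  also have "\<dots> = emeasure lborel ({t. frac (s + t) \<in> A} \<inter> {0..<1})"
  proof -
    have "{t. frac (s + t) \<in> A} \<inter> {0..1} = ({t. frac (s + t) \<in> A} \<inter> {0..<1}) \<union> ({t. frac (s + t) \<in> A} \<inter> {1})"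
      by auto
    moreover have "{t. frac (s + t) \<in> A} \<inter> {1} \<in> null_sets lborel"
      by (rule null_sets_subset[of "{1}"]) (use mA in auto)
    ultimately show ?thesis using mA by (simp add: emeasure_Un_null_set)
  qed
  also have "emeasure lborel ({t. frac (s + t) \<in> A} \<inter> {0..<1}) = emeasure lborel ({t. frac (frac s + t) \<in> A} \<inter> {0..<1})"
  proof -
    have "frac (s + t) = frac (frac s + t)" for t
      using frac_add_of_int_right[of "frac s + t" "\<lfloor>s\<rfloor>"] by (simp add: frac_def algebra_simps)
    then show ?thesis by simp
  qed
  also have "\<dots> = emeasure lborel (A \<inter> {0..<1})"
    by (rule key0) (auto simp: frac_lt_1 A)
  finally show ?thesis .
qed

lemma (in prob_space) indep_frac_shift:
  fixes Y :: "'a \<Rightarrow> 'b::topological_space" and c :: "'a \<Rightarrow> real" and \<phi> :: "'b \<Rightarrow> real"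
  assumes Ym[measurable]: "Y \<in> borel_measurable M" and cm[measurable]: "c \<in> borel_measurable M"
    and ind: "\<And>B C. B \<in> sets borel \<Longrightarrow> C \<in> sets borel \<Longrightarrow>
       prob (Y -` B \<inter> space M \<inter> (c -` C \<inter> space M)) = prob (Y -` B \<inter> space M) * prob (c -` C \<inter> space M)"
    and dc: "distributed M lborel c (indicator {0..1})"
    and phi[measurable]: "\<phi> \<in> borel_measurable borel"
  shows "indep_set (sets (vimage_algebra (space M) (\<lambda>\<omega>. frac (\<phi> (Y \<omega>) + c \<omega>)) borel))
                   (sets (vimage_algebra (space M) Y borel))"
proof -
  define DY where "DY = distr M borel Y"
  define DC where "DC = distr M borel c"
  have DC_eq: "DC = density lborel (indicator {0..1})"
  proof -
    have "DC = distr M lborel c" unfolding DC_def by (rule distr_cong) auto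
    then show ?thesis using dc by (simp add: distributed_def)
  qed
  interpret DC: prob_space DC unfolding DC_def by (rule prob_space_distr) (rule cm)
  interpret DY: prob_space DY unfolding DY_def by (rule prob_space_distr) (rule Ym)
  have prodeq: "DY \<Otimes>\<^sub>M DC = distr M (borel \<Otimes>\<^sub>M borel) (\<lambda>x. (Y x, c x))"
  proof (rule pair_measure_eqI)
    show "sigma_finite_measure DY" by (rule DY.sigma_finite_measure_axioms)
    show "sigma_finite_measure DC" by (rule DC.sigma_finite_measure_axioms)
    show "sets (DY \<Otimes>\<^sub>M DC) = sets (distr M (borel \<Otimes>\<^sub>M borel) (\<lambda>x. (Y x, c x)))"
      unfolding DY_def DC_def by (simp only: sets_distr) (rule sets_pair_measure_cong; simp)
  next
    fix B C assume "B \<in> sets DY" "C \<in> sets DC"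
    then have B[measurable]: "B \<in> sets borel" and C[measurable]: "C \<in> sets borel"
      by (auto simp: DY_def DC_def)
    have "emeasure (distr M (borel \<Otimes>\<^sub>M borel) (\<lambda>x. (Y x, c x))) (B \<times> C)
        = emeasure M ((\<lambda>x. (Y x, c x)) -` (B \<times> C) \<inter> space M)"
      by (subst emeasure_distr) auto
    also have "(\<lambda>x. (Y x, c x)) -` (B \<times> C) \<inter> space M = Y -` B \<inter> space M \<inter> (c -` C \<inter> space M)"
      by auto
    also have "emeasure M \<dots> = emeasure M (Y -` B \<inter> space M) * emeasure M (c -` C \<inter> space M)"
      using ind[OF B C] by (simp add: emeasure_eq_measure ennreal_mult[symmetric] measure_nonneg)
    also have "\<dots> = emeasure DY B * emeasure DC C"
      unfolding DY_def DC_def by (simp add: emeasure_distr)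
    finally show "emeasure DY B * emeasure DC C = emeasure (distr M (borel \<Otimes>\<^sub>M borel) (\<lambda>x. (Y x, c x))) (B \<times> C)" ..
  qed
  define L where "L A = emeasure lborel (A \<inter> {0..<1})" for A :: "real set"
  have main: "emeasure M ((\<lambda>\<omega>. frac (\<phi> (Y \<omega>) + c \<omega>)) -` A \<inter> space M \<inter> (Y -` B \<inter> space M))
       = L A * emeasure M (Y -` B \<inter> space M)" if A[measurable]: "A \<in> sets borel" and B[measurable]: "B \<in> sets borel" for A B
  proof -
    define S where "S = {x \<in> space (borel \<Otimes>\<^sub>M borel). frac (\<phi> (fst x) + snd x) \<in> A \<and> fst x \<in> B}"
    have Sm: "S \<in> sets (borel \<Otimes>\<^sub>M (borel :: real measure))" unfolding S_def by measurable
    have "emeasure M ((\<lambda>\<omega>. frac (\<phi> (Y \<omega>) + c \<omega>)) -` A \<inter> space M \<inter> (Y -` B \<inter> space M))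
        = emeasure M ((\<lambda>x. (Y x, c x)) -` S \<inter> space M)"
      by (rule arg_cong[where f="emeasure M"]) (auto simp: S_def space_pair_measure)
    also have "\<dots> = emeasure (distr M (borel \<Otimes>\<^sub>M borel) (\<lambda>x. (Y x, c x))) S"
      using Sm by (subst emeasure_distr) auto
    also have "\<dots> = emeasure (DY \<Otimes>\<^sub>M DC) S" by (simp add: prodeq)
    also have "\<dots> = (\<integral>\<^sup>+y. emeasure DC (Pair y -` S) \<partial>DY)"
    proof (rule DC.emeasure_pair_measure_alt)
      have "sets (DY \<Otimes>\<^sub>M DC) = sets (borel \<Otimes>\<^sub>M borel)"
        unfolding DY_def DC_def by (rule sets_pair_measure_cong) auto
      then show "S \<in> sets (DY \<Otimes>\<^sub>M DC)" using Sm by simp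
    qed
    also have "\<dots> = (\<integral>\<^sup>+y. L A * indicator B y \<partial>DY)"
    proof (rule nn_integral_cong)
      fix y
      have "Pair y -` S = (if y \<in> B then {t. frac (\<phi> y + t) \<in> A} else {})"
        by (auto simp: S_def space_pair_measure)
      then show "emeasure DC (Pair y -` S) = L A * indicator B y"
        by (simp add: DC_eq key1 L_def)
    qed
    also have "\<dots> = L A * emeasure DY B"
      by (rule nn_integral_cmult_indicator) (simp add: DY_def)
    also have "\<dots> = L A * emeasure M (Y -` B \<inter> space M)"
      unfolding DY_def by (subst emeasure_distr) auto
    finally show ?thesis .
  qed
  have marg: "emeasure M ((\<lambda>\<omega>. frac (\<phi> (Y \<omega>) + c \<omega>)) -` A \<inter> space M) = L A" if A: "A \<in> sets borel" for A
  proof -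
    have "Y -` UNIV \<inter> space M = space M" by simp
    moreover have "(\<lambda>\<omega>. frac (\<phi> (Y \<omega>) + c \<omega>)) -` A \<inter> space M \<inter> space M = (\<lambda>\<omega>. frac (\<phi> (Y \<omega>) + c \<omega>)) -` A \<inter> space M" by blast
    moreover have U: "UNIV \<in> sets (borel :: 'b measure)" using sets.top[of "borel :: 'b measure"] by (simp only: space_borel)
    ultimately show ?thesis using main[OF A U] by (simp only: emeasure_space_1 mult_1_right sets_UNIV)
  qed
  show ?thesis
  proof (rule indep_setI)
    show "sets (vimage_algebra (space M) (\<lambda>\<omega>. frac (\<phi> (Y \<omega>) + c \<omega>)) borel) \<subseteq> events"
      by (subst sets_vimage_algebra2) auto
    show "sets (vimage_algebra (space M) Y borel) \<subseteq> events"
      by (subst sets_vimage_algebra2) auto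
  next
    fix a b
    assume a0: "a \<in> sets (vimage_algebra (space M) (\<lambda>\<omega>. frac (\<phi> (Y \<omega>) + c \<omega>)) borel)"
      and b0: "b \<in> sets (vimage_algebra (space M) Y borel)"
    have ea: "sets (vimage_algebra (space M) (\<lambda>\<omega>. frac (\<phi> (Y \<omega>) + c \<omega>)) borel) = {(\<lambda>\<omega>. frac (\<phi> (Y \<omega>) + c \<omega>)) -` A \<inter> space M | A. A \<in> sets borel}"
      by (rule sets_vimage_algebra2) auto
    have eb: "sets (vimage_algebra (space M) Y borel) = {Y -` A \<inter> space M | A. A \<in> sets borel}"
      by (rule sets_vimage_algebra2) auto
    from a0[unfolded ea] obtain A where A: "A \<in> sets borel" "a = (\<lambda>\<omega>. frac (\<phi> (Y \<omega>) + c \<omega>)) -` A \<inter> space M"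
      by auto
    from b0[unfolded eb] obtain B where B: "B \<in> sets borel" "b = Y -` B \<inter> space M"
      by auto
    have e: "emeasure M (a \<inter> b) = emeasure M a * emeasure M b"
      unfolding A(2) B(2) marg[OF A(1)] by (rule main[OF A(1) B(1)])
    have "ennreal (prob (a \<inter> b)) = ennreal (prob a) * ennreal (prob b)"
      using e by (simp only: emeasure_eq_measure)
    also have "\<dots> = ennreal (prob a * prob b)"
      by (rule ennreal_mult[symmetric]) (rule measure_nonneg)+
    finally show "prob (a \<inter> b) = prob a * prob b"
      by (subst (asm) ennreal_inj) (auto intro: measure_nonneg)
  qed
qed

lemma (in prob_space) AE_unif:
  assumes "distributed M lborel X (indicator {0..1})"
  shows "AE \<omega> in M. 0 \<le> X \<omega> \<and> X \<omega> < (1::real)"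
proof -
  have Xm: "X \<in> measurable M lborel" using assms by (simp add: distributed_def)
  have "AE x in lborel. 0 < (indicator {0..1} x :: ennreal) \<longrightarrow> 0 \<le> x \<and> x < (1::real)"
    using AE_lborel_singleton[of "1::real"] by eventually_elim (auto simp: indicator_def)
  have d: "distr M lborel X = density lborel (indicator {0..1})" using assms by (simp add: distributed_def)
  have "AE x in density lborel (indicator {0..1}). 0 \<le> x \<and> x < (1::real)"
    by (subst AE_density) (auto intro: \<open>AE x in lborel. _\<close>)
  then have "AE x in distr M lborel X. 0 \<le> x \<and> x < (1::real)"
    unfolding d .
  then show ?thesis
    using Xm by (subst (asm) AE_distr_iff) auto
qed

lemma frac_diff_calc:
  fixes x y d :: real
  assumes "0 \<le> d" "d < 1" "x - y = d"
  shows "frac (frac x - frac y) = d"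
proof -
  have "frac x - frac y - d = of_int (\<lfloor>y\<rfloor> - \<lfloor>x\<rfloor>)"
    using assms by (simp add: frac_def algebra_simps)
  then show ?thesis unfolding frac_unique_iff using assms by (metis Ints_of_int)
qed

theorem mainTheorem5:
  fixes M :: "'s measure" and a b c :: "'s \<Rightarrow> real"
  assumes "prob_space M"
    and "prob_space.indep_vars M (\<lambda>_. borel) (\<lambda>i::nat. [a, b, c] ! i) {0, 1, 2}"
    and "distributed M lborel a (indicator {0..1})"
    and "distributed M lborel b (indicator {0..1})"
    and "distributed M lborel c (indicator {0..1})"
  defines "u \<equiv> (\<lambda>\<omega>. frac (a \<omega> + b \<omega> + c \<omega>))"
    and "v \<equiv> (\<lambda>\<omega>. frac (a \<omega> / 2 + b \<omega> / 2 + c \<omega>))"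
    and "w \<equiv> (\<lambda>\<omega>. frac (4 * a \<omega> / 3 + 2 * b \<omega> / 3 + c \<omega>))"
    and "z \<equiv> (\<lambda>\<omega>. frac (2 * a \<omega> / 3 + b \<omega> / 3 + c \<omega>))"
    and "Y \<equiv> (\<lambda>\<omega>. (a \<omega>, b \<omega>))"
  shows "prob_space.indep_set M (sets (vimage_algebra (space M) u borel)) (sets (vimage_algebra (space M) Y borel))
       \<and> prob_space.indep_set M (sets (vimage_algebra (space M) v borel)) (sets (vimage_algebra (space M) Y borel))
       \<and> prob_space.indep_set M (sets (vimage_algebra (space M) w borel)) (sets (vimage_algebra (space M) Y borel))
       \<and> prob_space.indep_set M (sets (vimage_algebra (space M) z borel)) (sets (vimage_algebra (space M) Y borel))
       \<and> (\<exists>g \<in> borel_measurable borel. AE \<omega> in M. Y \<omega> = g (u \<omega>, v \<omega>, w \<omega>, z \<omega>))"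
proof -
  interpret prob_space M by fact
  have am[measurable]: "a \<in> borel_measurable M" using assms(3) by (simp add: distributed_def)
  have bm[measurable]: "b \<in> borel_measurable M" using assms(4) by (simp add: distributed_def)
  have cm[measurable]: "c \<in> borel_measurable M" using assms(5) by (simp add: distributed_def)
  have Ym[measurable]: "Y \<in> borel_measurable M" unfolding Y_def by measurable
  have indYc: "prob (Y -` B \<inter> space M \<inter> (c -` C \<inter> space M)) = prob (Y -` B \<inter> space M) * prob (c -` C \<inter> space M)"
    if B[measurable]: "B \<in> sets borel" and C[measurable]: "C \<in> sets borel" for B C
  proof -
    let ?X = "\<lambda>i::nat. [a, b, c] ! i"
    have iv: "indep_var (PiM {0,1} (\<lambda>_. borel)) (\<lambda>\<omega>. restrict (\<lambda>i. ?X i \<omega>) {0,1})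
                       (PiM {2} (\<lambda>_. borel)) (\<lambda>\<omega>. restrict (\<lambda>i. ?X i \<omega>) {2})"
      by (rule indep_var_restrict[OF assms(2)]) auto
    define Xa where "Xa = {f \<in> space (PiM {0::nat,1} (\<lambda>_. borel :: real measure)). (f 0, f 1) \<in> B}"
    define Xb where "Xb = {f \<in> space (PiM {2::nat} (\<lambda>_. borel :: real measure)). f 2 \<in> C}"
    have Xa: "Xa \<in> sets (PiM {0::nat,1} (\<lambda>_. borel :: real measure))" unfolding Xa_def by measurable
    have Xb: "Xb \<in> sets (PiM {2::nat} (\<lambda>_. borel :: real measure))" unfolding Xb_def by measurable
    have "prob ((\<lambda>\<omega>. (restrict (\<lambda>i. ?X i \<omega>) {0,1}, restrict (\<lambda>i. ?X i \<omega>) {2})) -` (Xa \<times> Xb) \<inter> space M)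
        = prob ((\<lambda>\<omega>. restrict (\<lambda>i. ?X i \<omega>) {0,1}) -` Xa \<inter> space M) * prob ((\<lambda>\<omega>. restrict (\<lambda>i. ?X i \<omega>) {2}) -` Xb \<inter> space M)"
      by (rule indep_varD[OF iv Xa Xb])
    moreover have "(\<lambda>\<omega>. (restrict (\<lambda>i. ?X i \<omega>) {0,1}, restrict (\<lambda>i. ?X i \<omega>) {2})) -` (Xa \<times> Xb) \<inter> space M
        = Y -` B \<inter> space M \<inter> (c -` C \<inter> space M)"
      by (auto simp: Xa_def Xb_def Y_def space_PiM PiE_iff)
    moreover have "(\<lambda>\<omega>. restrict (\<lambda>i. ?X i \<omega>) {0,1}) -` Xa \<inter> space M = Y -` B \<inter> space M"
      by (auto simp: Xa_def Y_def space_PiM PiE_iff)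
    moreover have "(\<lambda>\<omega>. restrict (\<lambda>i. ?X i \<omega>) {2}) -` Xb \<inter> space M = c -` C \<inter> space M"
      by (auto simp: Xb_def space_PiM PiE_iff)
    ultimately show ?thesis by simp
  qed
  have gen: "indep_set (sets (vimage_algebra (space M) (\<lambda>\<omega>. frac (\<phi> (Y \<omega>) + c \<omega>)) borel))
                   (sets (vimage_algebra (space M) Y borel))"
    if "\<phi> \<in> borel_measurable borel" for \<phi> :: "real \<times> real \<Rightarrow> real"
    by (rule indep_frac_shift[OF Ym cm indYc assms(5) that])
  have Iu: "indep_set (sets (vimage_algebra (space M) u borel)) (sets (vimage_algebra (space M) Y borel))"
  proof -
    have "indep_set (sets (vimage_algebra (space M) (\<lambda>\<omega>. frac ((\<lambda>y. fst y + snd y) (Y \<omega>) + c \<omega>)) borel))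
                   (sets (vimage_algebra (space M) Y borel))"
      by (rule gen, rule borel_measurable_continuous_onI, auto intro!: continuous_intros)
    then show ?thesis by (simp add: u_def Y_def)
  qed
  have Iv: "indep_set (sets (vimage_algebra (space M) v borel)) (sets (vimage_algebra (space M) Y borel))"
  proof -
    have "indep_set (sets (vimage_algebra (space M) (\<lambda>\<omega>. frac ((\<lambda>y. fst y / 2 + snd y / 2) (Y \<omega>) + c \<omega>)) borel))
                   (sets (vimage_algebra (space M) Y borel))"
      by (rule gen, rule borel_measurable_continuous_onI, auto intro!: continuous_intros)
    then show ?thesis by (simp add: v_def Y_def)
  qed
  have Iw: "indep_set (sets (vimage_algebra (space M) w borel)) (sets (vimage_algebra (space M) Y borel))"
  proof -
    have "indep_set (sets (vimage_algebra (space M) (\<lambda>\<omega>. frac ((\<lambda>y. 4 * fst y / 3 + 2 * snd y / 3) (Y \<omega>) + c \<omega>)) borel))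
                   (sets (vimage_algebra (space M) Y borel))"
      by (rule gen, rule borel_measurable_continuous_onI, auto intro!: continuous_intros)
    then show ?thesis by (simp add: w_def Y_def)
  qed
  have Iz: "indep_set (sets (vimage_algebra (space M) z borel)) (sets (vimage_algebra (space M) Y borel))"
  proof -
    have "indep_set (sets (vimage_algebra (space M) (\<lambda>\<omega>. frac ((\<lambda>y. 2 * fst y / 3 + snd y / 3) (Y \<omega>) + c \<omega>)) borel))
                   (sets (vimage_algebra (space M) Y borel))"
      by (rule gen, rule borel_measurable_continuous_onI, auto intro!: continuous_intros)
    then show ?thesis by (simp add: z_def Y_def)
  qed
  have I: "indep_set (sets (vimage_algebra (space M) u borel)) (sets (vimage_algebra (space M) Y borel))
       \<and> indep_set (sets (vimage_algebra (space M) v borel)) (sets (vimage_algebra (space M) Y borel))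
       \<and> indep_set (sets (vimage_algebra (space M) w borel)) (sets (vimage_algebra (space M) Y borel))
       \<and> indep_set (sets (vimage_algebra (space M) z borel)) (sets (vimage_algebra (space M) Y borel))"
    using Iu Iv Iw Iz by blast
  define g where "g p = (let F1 = frac (fst p - fst (snd p)); F2 = frac (fst (snd (snd p)) - snd (snd (snd p)))
      in (3 * F2 - 2 * F1, 4 * F1 - 3 * F2))" for p :: "real \<times> real \<times> real \<times> real"
  have gm: "g \<in> borel_measurable borel" unfolding g_def Let_def borel_prod[symmetric] by measurable
  have "AE \<omega> in M. Y \<omega> = g (u \<omega>, v \<omega>, w \<omega>, z \<omega>)"
    using AE_unif[OF assms(3)] AE_unif[OF assms(4)]
  proof eventually_elim
    case (elim \<omega>)
    have F1: "frac (u \<omega> - v \<omega>) = (a \<omega> + b \<omega>) / 2"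
      unfolding u_def v_def by (rule frac_diff_calc) (use elim in auto)
    have F2: "frac (w \<omega> - z \<omega>) = (2 * a \<omega> + b \<omega>) / 3"
      unfolding w_def z_def by (rule frac_diff_calc) (use elim in auto)
    show ?case unfolding g_def Let_def Y_def using F1 F2 by (simp add: algebra_simps)
  qed
  with I gm show ?thesis by blast
qed
end
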